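(* Let $G$ be a simple graph with $8$ nodes, $16$ edges and minimum degree $\delta(G)=2$. Then $m_k(K_{4,4})<m_k(G)$ for every $k\in\{5,6,7,8\}$.
   Context: For a graph $H$, $m_k(H)$ denotes the number of edge sets $C\subseteq E(H)$ with $|C|=k$ such that $H-C$ is disconnected (cutsets of cardinality $k$). $K_{4,4}$ is the complete bipartite graph with two parts of size $4$. *)

theory Defs
  imports Main
begin

definition simple_graph :: "'a set \<Rightarrow> 'a set set \<Rightarrow> bool" where
  "simple_graph V E \<longleftrightarrow> finite V \<and>
     (\<forall>e\<in>E. \<exists>u v. u \<in> V \<and> v \<in> V \<and> u \<noteq> v \<and> e = {u, v})"

definition degree :: "'a set set \<Rightarrow> 'a \<Rightarrow> nat" where
  "degree E v = card {e \<in> E. v \<in> e}"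

definition min_degree :: "'a set \<Rightarrow> 'a set set \<Rightarrow> nat" where
  "min_degree V E = Min (degree E ` V)"

definition adj :: "'a set set \<Rightarrow> ('a \<times> 'a) set" where
  "adj E = {(u, v). {u, v} \<in> E}"

definition graph_connected :: "'a set \<Rightarrow> 'a set set \<Rightarrow> bool" where
  "graph_connected V E \<longleftrightarrow> (\<forall>u\<in>V. \<forall>v\<in>V. (u, v) \<in> (adj E)\<^sup>*)"

definition cutset_count :: "'a set \<Rightarrow> 'a set set \<Rightarrow> nat \<Rightarrow> nat" where
  "cutset_count V E k = card {C. C \<subseteq> E \<and> card C = k \<and> \<not> graph_connected V (E - C)}"

definition K44_V :: "nat set" where
  "K44_V = {0..<8}"

definition K44_E :: "nat set set" where
  "K44_E = {{i, j} | i j. i < 4 \<and> 4 \<le> j \<and> j < 8}"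

end

theory Submission
  imports Defs
begin


definition star :: "'a set set \<Rightarrow> 'a \<Rightarrow> 'a set set" where
  "star E x = {e\<in>E. x \<in> e}"

definition supsets :: "'a set set \<Rightarrow> nat \<Rightarrow> 'a set set \<Rightarrow> 'a set set set" where
  "supsets E k S = {C. C \<subseteq> E \<and> card C = k \<and> S \<subseteq> C}"

definition disc :: "'a set \<Rightarrow> 'a set set \<Rightarrow> nat \<Rightarrow> 'a set set set" where
  "disc V E k = {C. C \<subseteq> E \<and> card C = k \<and> \<not> graph_connected V (E - C)}"

definition gg :: "nat \<Rightarrow> nat" where
  "gg s = (if s \<le> 8 then (16 - s) choose (8 - s) else 0)"

lemma gg_vals: "gg 2 = 3003" "gg 3 = 1287" "gg 4 = 495" "gg 5 = 165" "gg 6 = 45"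
  "gg 7 = 9" "gg 8 = 1"
  unfolding gg_def by (simp_all add: binomial_code fold_atLeastAtMost_nat.simps fact_numeral)

lemma gg_big: "s > 8 \<Longrightarrow> gg s = 0" unfolding gg_def by simp

lemma supsets_finite: "finite E \<Longrightarrow> finite (supsets E k S)"
  unfolding supsets_def by (rule finite_subset[of _ "Pow E"]) auto

lemma supsets_Int: "supsets E k S \<inter> supsets E k T = supsets E k (S \<union> T)"
  unfolding supsets_def by auto

lemma card_supsets:
  assumes "finite E" "S \<subseteq> E"
  shows "card (supsets E k S) = (if card S \<le> k then (card E - card S) choose (k - card S) else 0)"
proof (cases "card S \<le> k")
  case True
  have fS: "finite S" using assms finite_subset by blast
  have "bij_betw (\<lambda>C. C - S) (supsets E k S) {D. D \<subseteq> E - S \<and> card D = k - card S}"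
  proof (rule bij_betw_byWitness[where f' = "\<lambda>D. D \<union> S"])
    show "\<forall>a\<in>supsets E k S. a - S \<union> S = a" unfolding supsets_def by auto
    show "\<forall>a\<in>{D. D \<subseteq> E - S \<and> card D = k - card S}. a \<union> S - S = a" by auto
    show "(\<lambda>C. C - S) ` supsets E k S \<subseteq> {D. D \<subseteq> E - S \<and> card D = k - card S}"
    proof
      fix D assume "D \<in> (\<lambda>C. C - S) ` supsets E k S"
      then obtain C where C: "C \<subseteq> E" "card C = k" "S \<subseteq> C" "D = C - S" unfolding supsets_def by auto
      have "finite C" using C assms finite_subset by blast
      moreover have "card (C - S) = card C - card S" using C(3) finite_subset[OF C(3) \<open>finite C\<close>] by (rule card_Diff_subset[rotated])
      ultimately show "D \<in> {D. D \<subseteq> E - S \<and> card D = k - card S}" using C by auto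
    qed
    show "(\<lambda>D. D \<union> S) ` {D. D \<subseteq> E - S \<and> card D = k - card S} \<subseteq> supsets E k S"
    proof
      fix C assume "C \<in> (\<lambda>D. D \<union> S) ` {D. D \<subseteq> E - S \<and> card D = k - card S}"
      then obtain D where D: "D \<subseteq> E - S" "card D = k - card S" "C = D \<union> S" by auto
      have "finite D" using D assms finite_subset by blast
      moreover have "D \<inter> S = {}" using D by auto
      ultimately have "card C = card D + card S" using D fS card_Un_disjoint by metis
      then show "C \<in> supsets E k S" using D True assms unfolding supsets_def by auto
    qed
  qed
  then have "card (supsets E k S) = card {D. D \<subseteq> E - S \<and> card D = k - card S}"
    using bij_betw_same_card by blast
  also have "\<dots> = card (E - S) choose (k - card S)" using assms by (simp add: n_subsets)
  also have "\<dots> = (card E - card S) choose (k - card S)" using assms fS by (simp add: card_Diff_subset)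
  finally show ?thesis using True by simp
next
  case False
  have "supsets E k S = {}"
  proof (rule ccontr)
    assume "supsets E k S \<noteq> {}"
    then obtain C where C: "C \<subseteq> E" "card C = k" "S \<subseteq> C" unfolding supsets_def by auto
    have "finite C" using C assms finite_subset by blast
    then have "card S \<le> card C" using C card_mono by blast
    then show False using C False by simp
  qed
  then show ?thesis using False by simp
qed

lemma card_supsets_gg:
  assumes "finite E" "S \<subseteq> E" "card E = 16"
  shows "card (supsets E 8 S) = gg (card S)"
  using card_supsets[OF assms(1,2), of 8] assms(3) unfolding gg_def by simp

lemma star_sub: "star E x \<subseteq> E" unfolding star_def by auto

lemma star_Int_card:
  assumes "\<forall>e\<in>E. \<exists>u v. u \<noteq> v \<and> e = {u, v}" "x \<noteq> y" "finite E"
  shows "card (star E x \<inter> star E y) \<le> 1"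
proof -
  have "star E x \<inter> star E y \<subseteq> {{x, y}}"
  proof
    fix e assume e: "e \<in> star E x \<inter> star E y"
    then obtain u v where "u \<noteq> v" "e = {u, v}" using assms unfolding star_def by blast
    then show "e \<in> {{x, y}}" using e assms(2) unfolding star_def by auto
  qed
  then have "card (star E x \<inter> star E y) \<le> card {{x, y}}" by (intro card_mono) auto
  then show ?thesis by simp
qed

lemma star_Int_eq:
  assumes "\<forall>e\<in>E. \<exists>u v. u \<noteq> v \<and> e = {u, v}" "x \<noteq> y"
  shows "star E x \<inter> star E y = (if {x, y} \<in> E then {{x, y}} else {})"
proof -
  have "star E x \<inter> star E y \<subseteq> {{x, y}}"
  proof
    fix e assume e: "e \<in> star E x \<inter> star E y"
    then obtain u v where "u \<noteq> v" "e = {u, v}" using assms unfolding star_def by blast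
    then show "e \<in> {{x, y}}" using e assms(2) unfolding star_def by auto
  qed
  then show ?thesis unfolding star_def by auto
qed

lemma star_Un_card:
  assumes "\<forall>e\<in>E. \<exists>u v. u \<noteq> v \<and> e = {u, v}" "x \<noteq> y" "finite E"
  shows "card (star E x \<union> star E y) = card (star E x) + card (star E y) - card (star E x \<inter> star E y)"
proof -
  have "finite (star E x)" "finite (star E y)" using assms(3) star_sub finite_subset by metis+
  then show ?thesis using card_Un_Int by (metis add_diff_cancel_right')
qed

lemma isolate_disc:
  assumes "x \<in> V" "y \<in> V" "x \<noteq> y" "star E x \<subseteq> C"
  shows "\<not> graph_connected V (E - C)"
proof
  assume "graph_connected V (E - C)"
  then have "(x, y) \<in> (adj (E - C))\<^sup>*" using assms unfolding graph_connected_def by blast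
  then obtain z where "(x, z) \<in> adj (E - C)" using assms(3) by (metis converse_rtranclE)
  then have "{x, z} \<in> E - C" unfolding adj_def by auto
  then have "{x, z} \<in> star E x" unfolding star_def by auto
  then show False using assms(4) \<open>{x, z} \<in> E - C\<close> by auto
qed

lemma supsets_star_disc:
  assumes "x \<in> V" "y \<in> V" "x \<noteq> y"
  shows "supsets E k (star E x) \<subseteq> disc V E k"
  using isolate_disc[OF assms] unfolding supsets_def disc_def by auto

fun psum :: "('b \<Rightarrow> 'c set) \<Rightarrow> 'b list \<Rightarrow> nat" where
  "psum A [] = 0"
| "psum A (x # xs) = sum_list (map (\<lambda>y. card (A x \<inter> A y)) xs) + psum A xs"

lemma card_Int_UN_le:
  assumes "\<And>x. finite (A x)"
  shows "card (X \<inter> (\<Union>y\<in>set ys. A y)) \<le> sum_list (map (\<lambda>y. card (X \<inter> A y)) ys)"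
proof (induction ys)
  case Nil then show ?case by simp
next
  case (Cons y ys)
  have "X \<inter> (\<Union>z\<in>set (y # ys). A z) = (X \<inter> A y) \<union> (X \<inter> (\<Union>z\<in>set ys. A z))" by auto
  then have "card (X \<inter> (\<Union>z\<in>set (y # ys). A z)) \<le> card (X \<inter> A y) + card (X \<inter> (\<Union>z\<in>set ys. A z))"
    by (simp add: card_Un_le)
  then show ?case using Cons by simp
qed

lemma bonf_lower:
  assumes "\<And>x. finite (A x)"
  shows "int (sum_list (map (\<lambda>x. card (A x)) L)) - int (psum A L) \<le> int (card (\<Union>x\<in>set L. A x))"
proof (induction L)
  case Nil then show ?case by simp
next
  case (Cons x xs)
  let ?U = "\<Union>y\<in>set xs. A y"
  have fU: "finite ?U" using assms by auto
  have "card (A x \<union> ?U) + card (A x \<inter> ?U) = card (A x) + card ?U"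
    using card_Un_Int[OF assms fU] by simp
  moreover have "card (A x \<inter> ?U) \<le> sum_list (map (\<lambda>y. card (A x \<inter> A y)) xs)"
    using card_Int_UN_le[of A, OF assms] by blast
  moreover have "(\<Union>y\<in>set (x # xs). A y) = A x \<union> ?U" by auto
  ultimately show ?case using Cons by simp
qed

lemma card_Int_UN_eq:
  assumes "\<And>x. finite (A x)" "distinct ys"
    "\<And>y z. y \<in> set ys \<Longrightarrow> z \<in> set ys \<Longrightarrow> y \<noteq> z \<Longrightarrow> X \<inter> A y \<inter> A z = {}"
  shows "card (X \<inter> (\<Union>y\<in>set ys. A y)) = sum_list (map (\<lambda>y. card (X \<inter> A y)) ys)"
  using assms(2,3)
proof (induction ys)
  case Nil then show ?case by simp
next
  case (Cons y ys)
  have eq: "X \<inter> (\<Union>z\<in>set (y # ys). A z) = (X \<inter> A y) \<union> (X \<inter> (\<Union>z\<in>set ys. A z))" by auto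
  have dis: "(X \<inter> A y) \<inter> (X \<inter> (\<Union>z\<in>set ys. A z)) = {}"
    using Cons.prems by fastforce
  have "card (X \<inter> (\<Union>z\<in>set (y # ys). A z)) = card (X \<inter> A y) + card (X \<inter> (\<Union>z\<in>set ys. A z))"
    unfolding eq using dis assms(1) by (intro card_Un_disjoint) auto
  then show ?case using Cons by simp
qed

lemma bonf_upper:
  assumes "\<And>x. finite (A x)" "distinct L"
    "\<And>x y z. x \<in> set L \<Longrightarrow> y \<in> set L \<Longrightarrow> z \<in> set L \<Longrightarrow> x \<noteq> y \<Longrightarrow> y \<noteq> z \<Longrightarrow> x \<noteq> z
       \<Longrightarrow> A x \<inter> A y \<inter> A z = {}"
  shows "card (\<Union>x\<in>set L. A x) + psum A L = sum_list (map (\<lambda>x. card (A x)) L)"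
  using assms(2,3)
proof (induction L)
  case Nil then show ?case by simp
next
  case (Cons x xs)
  let ?U = "\<Union>y\<in>set xs. A y"
  have fU: "finite ?U" using assms by auto
  have "card (A x \<union> ?U) + card (A x \<inter> ?U) = card (A x) + card ?U"
    using card_Un_Int[OF assms(1) fU] by simp
  moreover have "card (A x \<inter> ?U) = sum_list (map (\<lambda>y. card (A x \<inter> A y)) xs)"
    using Cons.prems by (intro card_Int_UN_eq[OF assms(1)]) auto
  moreover have "(\<Union>y\<in>set (x # xs). A y) = A x \<union> ?U" by auto
  moreover have "card ?U + psum A xs = sum_list (map (\<lambda>x. card (A x)) xs)"
    using Cons by auto
  ultimately show ?case by simp
qed



fun pbound :: "('a \<Rightarrow> nat) \<Rightarrow> 'a list \<Rightarrow> nat" where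
  "pbound d [] = 0"
| "pbound d (x # xs) = sum_list (map (\<lambda>y. max (gg (d x + d y - 1)) (gg (d x + d y))) xs) + pbound d xs"

lemma degree_star: "degree E x = card (star E x)"
  unfolding degree_def star_def by simp

lemma simple_edges: "simple_graph V E \<Longrightarrow> \<forall>e\<in>E. \<exists>u v. u \<noteq> v \<and> e = {u, v}"
  unfolding simple_graph_def by blast

lemma pair_card_bound:
  assumes "simple_graph V E" "finite E" "card E = 16" "x \<noteq> y"
  shows "card (supsets E 8 (star E x) \<inter> supsets E 8 (star E y))
           \<le> max (gg (degree E x + degree E y - 1)) (gg (degree E x + degree E y))"
proof -
  have se: "\<forall>e\<in>E. \<exists>u v. u \<noteq> v \<and> e = {u, v}" using simple_edges[OF assms(1)] .
  have c: "card (supsets E 8 (star E x) \<inter> supsets E 8 (star E y)) = gg (card (star E x \<union> star E y))"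
    unfolding supsets_Int using assms by (intro card_supsets_gg) (auto simp: star_def)
  have u: "card (star E x \<union> star E y) = degree E x + degree E y - card (star E x \<inter> star E y)"
    unfolding degree_star using star_Un_card[OF se assms(4) assms(2)] .
  have i: "card (star E x \<inter> star E y) \<le> 1" using star_Int_card[OF se assms(4) assms(2)] .
  have ile: "card (star E x \<inter> star E y) \<le> degree E x"
    unfolding degree_star using assms(2) star_sub finite_subset by (metis card_mono inf_le1)
  show ?thesis
  proof (cases "card (star E x \<inter> star E y) = 0")
    case True then show ?thesis using c u by simp
  next
    case False then have "card (star E x \<inter> star E y) = 1" using i by simp
    then show ?thesis using c u by simp
  qed
qed

lemma psum_pbound:
  assumes "simple_graph V E" "finite E" "card E = 16" "distinct L"
  shows "psum (\<lambda>x. supsets E 8 (star E x)) L \<le> pbound (degree E) L"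
  using assms(4)
proof (induction L)
  case Nil then show ?case by simp
next
  case (Cons x xs)
  have "sum_list (map (\<lambda>y. card (supsets E 8 (star E x) \<inter> supsets E 8 (star E y))) xs)
      \<le> sum_list (map (\<lambda>y. max (gg (degree E x + degree E y - 1)) (gg (degree E x + degree E y))) xs)"
  proof (rule sum_list_mono)
    fix y assume "y \<in> set xs"
    then have "x \<noteq> y" using Cons.prems by auto
    then show "card (supsets E 8 (star E x) \<inter> supsets E 8 (star E y))
      \<le> max (gg (degree E x + degree E y - 1)) (gg (degree E x + degree E y))"
      by (rule pair_card_bound[OF assms(1-3)])
  qed
  then show ?case using Cons by simp
qed

lemma G_lb:
  assumes "simple_graph V E" "card E = 16" "distinct L" "set L \<subseteq> V" "\<And>x. x \<in> V \<Longrightarrow> \<exists>y\<in>V. y \<noteq> x"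
  shows "int (sum_list (map (\<lambda>x. gg (degree E x)) L)) - int (pbound (degree E) L) \<le> int (card (disc V E 8))"
proof -
  have fE: "finite E" using assms(2) card.infinite by fastforce
  let ?A = "\<lambda>x. supsets E 8 (star E x)"
  have fA: "\<And>x. finite (?A x)" using supsets_finite[OF fE] .
  have b: "int (sum_list (map (\<lambda>x. card (?A x)) L)) - int (psum ?A L) \<le> int (card (\<Union>x\<in>set L. ?A x))"
    using bonf_lower[of ?A, OF fA] .
  have cA: "\<And>x. card (?A x) = gg (degree E x)"
    unfolding degree_star using fE assms(2) by (intro card_supsets_gg) (auto simp: star_def)
  have "(\<Union>x\<in>set L. ?A x) \<subseteq> disc V E 8"
  proof
    fix C assume "C \<in> (\<Union>x\<in>set L. ?A x)"
    then obtain x where x: "x \<in> set L" "C \<in> ?A x" by blast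
    then have "x \<in> V" using assms(4) by blast
    then obtain y where "y \<in> V" "y \<noteq> x" using assms(5) by blast
    then show "C \<in> disc V E 8" using supsets_star_disc[OF \<open>x \<in> V\<close> \<open>y \<in> V\<close>] x by auto
  qed
  moreover have "finite (disc V E 8)"
    by (rule finite_subset[of _ "Pow E"]) (auto simp: disc_def fE)
  ultimately have "card (\<Union>x\<in>set L. ?A x) \<le> card (disc V E 8)" by (rule card_mono[rotated])
  moreover have "psum ?A L \<le> pbound (degree E) L" using psum_pbound[OF assms(1) fE assms(2,3)] .
  ultimately show ?thesis using b cA by simp
qed



lemma handshake:
  assumes "simple_graph V E" "finite E"
  shows "(\<Sum>w\<in>V. degree E w) = 2 * card E"
proof -
  have fV: "finite V" using assms(1) unfolding simple_graph_def by blast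
  have "(\<Sum>w\<in>V. degree E w) = (\<Sum>w\<in>V. \<Sum>e\<in>E. if w \<in> e then 1 else 0)"
    unfolding degree_def using assms(2) by (simp add: sum.inter_filter[symmetric])
  also have "\<dots> = (\<Sum>e\<in>E. \<Sum>w\<in>V. if w \<in> e then 1 else 0)" by (rule sum.swap)
  also have "\<dots> = (\<Sum>e\<in>E. 2)"
  proof (rule sum.cong[OF refl])
    fix e assume "e \<in> E"
    then obtain u v where uv: "u \<in> V" "v \<in> V" "u \<noteq> v" "e = {u, v}"
      using assms(1) unfolding simple_graph_def by blast
    have "(\<Sum>w\<in>V. if w \<in> e then 1 else 0) = card {w\<in>V. w \<in> e}"
      using fV by (simp add: sum.inter_filter[symmetric])
    also have "{w\<in>V. w \<in> e} = {u, v}" using uv by auto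
    finally show "(\<Sum>w\<in>V. if w \<in> e then 1 else 0) = (2::nat)" using uv by simp
  qed
  finally show ?thesis by simp
qed

lemma pick_list:
  assumes "finite D" "n \<le> card D"
  shows "\<exists>xs. distinct xs \<and> length xs = n \<and> set xs \<subseteq> D"
proof -
  obtain T where T: "T \<subseteq> D" "card T = n" "finite T" using obtain_subset_with_card_n[OF assms(2)] by metis
  obtain xs where "set xs = T" "distinct xs" using finite_distinct_list[OF T(3)] by blast
  then show ?thesis using T distinct_card by metis
qed

lemma pick1: "finite D \<Longrightarrow> 1 \<le> card D \<Longrightarrow> \<exists>a. a \<in> D"
  using pick_list[of D 1] by (auto simp: length_Suc_conv)
lemma pick2: "finite D \<Longrightarrow> 2 \<le> card D \<Longrightarrow> \<exists>a b. a \<in> D \<and> b \<in> D \<and> distinct [a, b]"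
  using pick_list[of D 2] apply (auto simp: length_Suc_conv numeral_eq_Suc) by blast
lemma pick3: "finite D \<Longrightarrow> 3 \<le> card D \<Longrightarrow> \<exists>a b c. a \<in> D \<and> b \<in> D \<and> c \<in> D \<and> distinct [a, b, c]"
  using pick_list[of D 3] apply (auto simp: length_Suc_conv numeral_eq_Suc) by blast
lemma pick5: "finite D \<Longrightarrow> 5 \<le> card D \<Longrightarrow> \<exists>a b c d e. a \<in> D \<and> b \<in> D \<and> c \<in> D \<and> d \<in> D \<and> e \<in> D \<and> distinct [a, b, c, d, e]"
  using pick_list[of D 5] apply (auto simp: length_Suc_conv numeral_eq_Suc) by blast



lemma G_main8:
  assumes sg: "simple_graph V E" and cV: "card V = 8" and cE: "card E = 16" and md: "min_degree V E = 2"
  shows "4508 < card (disc V E 8)"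
proof -
  have fV: "finite V" using sg unfolding simple_graph_def by blast
  have fE: "finite E" using cE card.infinite by fastforce
  have Vne: "V \<noteq> {}" using cV by auto
  have other: "\<And>x. x \<in> V \<Longrightarrow> \<exists>y\<in>V. y \<noteq> x"
  proof -
    fix x assume "x \<in> V"
    have "card (V - {x}) = 7" using cV \<open>x \<in> V\<close> fV by simp
    then obtain y where "y \<in> V - {x}" by (metis card.empty ex_in_conv zero_neq_numeral)
    then show "\<exists>y\<in>V. y \<noteq> x" by blast
  qed
  have ge2: "\<And>w. w \<in> V \<Longrightarrow> degree E w \<ge> 2"
    using md fV unfolding min_degree_def by (metis Min_le finite_imageI imageI)
  have "Min (degree E ` V) \<in> degree E ` V" using fV Vne by (intro Min_in) auto
  then obtain v where v: "v \<in> V" "degree E v = 2" using md unfolding min_degree_def by auto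
  let ?V' = "V - {v}"
  have fV': "finite ?V'" using fV by simp
  have cV': "card ?V' = 7" using cV v fV by simp
  have hs: "(\<Sum>w\<in>V. degree E w) = 32" using handshake[OF sg fE] cE by simp
  have s30: "(\<Sum>w\<in>?V'. degree E w) = 30"
    using hs v fV sum.remove[OF fV v(1), of "degree E"] by simp
  let ?lb = "\<lambda>L. int (sum_list (map (\<lambda>x. gg (degree E x)) L)) - int (pbound (degree E) L)"
  have lb: "\<And>L. distinct L \<Longrightarrow> set L \<subseteq> V \<Longrightarrow> ?lb L \<le> int (card (disc V E 8))"
    using G_lb[OF sg cE _ _ other] by blast
  show ?thesis
  proof (cases "\<exists>w\<in>?V'. degree E w = 2")
    case True
    then obtain w where w: "w \<in> V" "w \<noteq> v" "degree E w = 2" by blast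
    have "?lb [v, w] \<le> int (card (disc V E 8))" using w v by (intro lb) auto
    then show ?thesis using v w by (simp add: gg_vals)
  next
    case False
    let ?D3 = "{w\<in>?V'. degree E w = 3}"
    let ?D4 = "{w\<in>?V'. degree E w = 4}"
    let ?R = "{w\<in>?V'. degree E w \<noteq> 3 \<and> degree E w \<noteq> 4}"
    have f3: "finite ?D3" "finite ?D4" "finite ?R" using fV' by auto
    have part: "?V' = ?D3 \<union> (?D4 \<union> ?R)" by auto
    have d1: "?D3 \<inter> (?D4 \<union> ?R) = {}" by auto
    have d2: "?D4 \<inter> ?R = {}" by auto
    have "card (?D3 \<union> (?D4 \<union> ?R)) = card ?D3 + card ?D4 + card ?R"
      by (simp only: card_Un_disjoint[OF f3(1) finite_UnI[OF f3(2,3)] d1] card_Un_disjoint[OF f3(2,3) d2] add.assoc)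
    then have cpart: "card ?D3 + card ?D4 + card ?R = 7"
      using cV' by (simp only: part[symmetric])
    have sR: "(\<Sum>w\<in>?R. degree E w) \<ge> 5 * card ?R"
    proof -
      have "degree E w \<ge> 5" if "w \<in> ?R" for w
      proof -
        have "w \<in> V" "w \<noteq> v" "degree E w \<noteq> 3" "degree E w \<noteq> 4" using that by auto
        moreover then have "degree E w \<noteq> 2" using False by auto
        ultimately show ?thesis using ge2[of w] by linarith
      qed
      then have "(\<Sum>w\<in>?R. (5::nat)) \<le> (\<Sum>w\<in>?R. degree E w)" by (intro sum_mono) auto
      then show ?thesis by simp
    qed
    have s3: "(\<Sum>w\<in>?D3. degree E w) = 3 * card ?D3" by simp
    have s4: "(\<Sum>w\<in>?D4. degree E w) = 4 * card ?D4" by simp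
    have "(\<Sum>w\<in>?D3 \<union> (?D4 \<union> ?R). degree E w) = (\<Sum>w\<in>?D3. degree E w) + (\<Sum>w\<in>?D4. degree E w) + (\<Sum>w\<in>?R. degree E w)"
      by (simp only: sum.union_disjoint[OF f3(1) finite_UnI[OF f3(2,3)] d1] sum.union_disjoint[OF f3(2,3) d2] add.assoc)
    then have "(\<Sum>w\<in>?V'. degree E w) = (\<Sum>w\<in>?D3. degree E w) + (\<Sum>w\<in>?D4. degree E w) + (\<Sum>w\<in>?R. degree E w)"
      by (simp only: part[symmetric])
    then have key: "2 * card ?D3 + card ?D4 \<ge> 5" using s30 s3 s4 sR cpart by linarith
    have v3: "\<And>x. x \<in> ?D3 \<Longrightarrow> x \<in> V \<and> x \<noteq> v \<and> degree E x = 3" by auto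
    have v4: "\<And>x. x \<in> ?D4 \<Longrightarrow> x \<in> V \<and> x \<noteq> v \<and> degree E x = 4" by auto
    have d34: "\<And>x y. x \<in> ?D3 \<Longrightarrow> y \<in> ?D4 \<Longrightarrow> x \<noteq> y" by auto
    consider "card ?D3 \<ge> 3" | "card ?D3 = 2 \<and> card ?D4 \<ge> 1" | "card ?D3 = 1 \<and> card ?D4 \<ge> 3"
      | "card ?D3 = 0 \<and> card ?D4 \<ge> 5" using key by linarith
    then show ?thesis
    proof cases
      case 1
      then obtain a b c where abc: "a \<in> ?D3" "b \<in> ?D3" "c \<in> ?D3" "distinct [a, b, c]"
        using pick3[OF f3(1)] by blast
      have "?lb [v, a, b, c] \<le> int (card (disc V E 8))"
        using abc v3[OF abc(1)] v3[OF abc(2)] v3[OF abc(3)] v by (intro lb) auto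
      then show ?thesis using v v3[OF abc(1)] v3[OF abc(2)] v3[OF abc(3)] by (simp add: gg_vals)
    next
      case 2
      then obtain a b where ab: "a \<in> ?D3" "b \<in> ?D3" "distinct [a, b]"
        using pick2[OF f3(1)] by auto
      obtain c where c: "c \<in> ?D4" using 2 pick1[OF f3(2)] by auto
      have "?lb [v, a, b, c] \<le> int (card (disc V E 8))"
        using ab c v3[OF ab(1)] v3[OF ab(2)] v4[OF c] d34[OF ab(1) c] d34[OF ab(2) c] v
        by (intro lb) auto
      then show ?thesis using v v3[OF ab(1)] v3[OF ab(2)] v4[OF c] by (simp add: gg_vals)
    next
      case 3
      then obtain a where a: "a \<in> ?D3" using pick1[OF f3(1)] by auto
      obtain b c d where bcd: "b \<in> ?D4" "c \<in> ?D4" "d \<in> ?D4" "distinct [b, c, d]"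
        using 3 pick3[OF f3(2)] by blast
      have "?lb [v, a, b, c, d] \<le> int (card (disc V E 8))"
        using a bcd v3[OF a] v4[OF bcd(1)] v4[OF bcd(2)] v4[OF bcd(3)]
          d34[OF a bcd(1)] d34[OF a bcd(2)] d34[OF a bcd(3)] v
        by (intro lb) auto
      then show ?thesis using v v3[OF a] v4[OF bcd(1)] v4[OF bcd(2)] v4[OF bcd(3)] by (simp add: gg_vals)
    next
      case 4
      then obtain a b c d e where ae: "a \<in> ?D4" "b \<in> ?D4" "c \<in> ?D4" "d \<in> ?D4" "e \<in> ?D4"
          "distinct [a, b, c, d, e]"
        using pick5[OF f3(2)] by blast
      have "?lb [v, a, b, c, d, e] \<le> int (card (disc V E 8))"
        using ae v4[OF ae(1)] v4[OF ae(2)] v4[OF ae(3)] v4[OF ae(4)] v4[OF ae(5)] v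
        by (intro lb) auto
      then show ?thesis using v v4[OF ae(1)] v4[OF ae(2)] v4[OF ae(3)] v4[OF ae(4)] v4[OF ae(5)]
        by (simp add: gg_vals)
    qed
  qed
qed



lemma K44_E_img: "K44_E = (\<lambda>(i, j). {i, j}) ` ({0..<4} \<times> {4..<8})"
  unfolding K44_E_def apply (auto simp: image_iff) by blast

lemma K44_inj: "inj_on (\<lambda>(i::nat, j::nat). {i, j}) ({0..<4} \<times> {4..<8})"
  unfolding inj_on_def by (auto simp: doubleton_eq_iff)

lemma K44_fin: "finite K44_E" unfolding K44_E_img by simp

lemma K44_card: "card K44_E = 16"
  unfolding K44_E_img by (simp add: card_image[OF K44_inj])

lemma K44_edge: "e \<in> K44_E \<Longrightarrow> \<exists>i j. i < 4 \<and> 4 \<le> j \<and> j < 8 \<and> e = {i, j}"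
  unfolding K44_E_def by blast

lemma K44_mem: "{i, j} \<in> K44_E \<longleftrightarrow> (i < 4 \<and> 4 \<le> j \<and> j < 8) \<or> (j < 4 \<and> 4 \<le> i \<and> i < 8)"
proof
  assume "{i, j} \<in> K44_E"
  then obtain a b where ab: "a < 4" "4 \<le> b" "b < 8" "{i, j} = {a, b}" using K44_edge by blast
  then have "(i = a \<and> j = b) \<or> (i = b \<and> j = a)" by (simp add: doubleton_eq_iff)
  then show "(i < 4 \<and> 4 \<le> j \<and> j < 8) \<or> (j < 4 \<and> 4 \<le> i \<and> i < 8)" using ab by auto
next
  assume h: "(i < 4 \<and> 4 \<le> j \<and> j < 8) \<or> (j < 4 \<and> 4 \<le> i \<and> i < 8)"
  show "{i, j} \<in> K44_E"
  proof (cases "i < 4")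
    case True then show ?thesis using h unfolding K44_E_def by blast
  next
    case False
    then have "j < 4" "4 \<le> i" "i < 8" using h by auto
    moreover have "{i, j} = {j, i}" by blast
    ultimately show ?thesis unfolding K44_E_def by blast
  qed
qed

lemma K44_simple: "\<forall>e\<in>K44_E. \<exists>u v. u \<noteq> v \<and> e = {u, v}"
proof
  fix e assume "e \<in> K44_E"
  then obtain i j where "i < 4" "4 \<le> j" "j < 8" "e = {i, j}" using K44_edge by blast
  then show "\<exists>u v. u \<noteq> v \<and> e = {u, v}" by (intro exI[of _ i] exI[of _ j]) auto
qed

lemma K44_sub: "e \<in> K44_E \<Longrightarrow> e \<subseteq> K44_V"
proof -
  assume "e \<in> K44_E"
  then obtain i j where "i < 4" "4 \<le> j" "j < 8" "e = {i, j}" using K44_edge by blast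
  then show "e \<subseteq> K44_V" unfolding K44_V_def by auto
qed

lemma K44_star_lo: assumes "i < 4" shows "star K44_E i = (\<lambda>j. {i, j}) ` {4..<8}"
proof (rule set_eqI)
  fix e show "e \<in> star K44_E i \<longleftrightarrow> e \<in> (\<lambda>j. {i, j}) ` {4..<8}"
  proof
    assume "e \<in> star K44_E i"
    then have "e \<in> K44_E" "i \<in> e" unfolding star_def by auto
    then obtain a b where ab: "a < 4" "4 \<le> b" "b < 8" "e = {a, b}" using K44_edge by blast
    then have "i = a" using \<open>i \<in> e\<close> assms by auto
    then show "e \<in> (\<lambda>j. {i, j}) ` {4..<8}" using ab by auto
  next
    assume "e \<in> (\<lambda>j. {i, j}) ` {4..<8}"
    then obtain j where j: "4 \<le> j" "j < 8" "e = {i, j}" by auto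
    then have "e \<in> K44_E" using K44_mem assms by auto
    then show "e \<in> star K44_E i" unfolding star_def using j by auto
  qed
qed

lemma K44_star_hi: assumes "4 \<le> i" "i < 8" shows "star K44_E i = (\<lambda>j. {j, i}) ` {0..<4}"
proof (rule set_eqI)
  fix e show "e \<in> star K44_E i \<longleftrightarrow> e \<in> (\<lambda>j. {j, i}) ` {0..<4}"
  proof
    assume "e \<in> star K44_E i"
    then have "e \<in> K44_E" "i \<in> e" unfolding star_def by auto
    then obtain a b where ab: "a < 4" "4 \<le> b" "b < 8" "e = {a, b}" using K44_edge by blast
    then have "i = b" using \<open>i \<in> e\<close> assms by auto
    then show "e \<in> (\<lambda>j. {j, i}) ` {0..<4}" using ab by auto
  next
    assume "e \<in> (\<lambda>j. {j, i}) ` {0..<4}"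
    then obtain j where j: "j < 4" "e = {j, i}" by auto
    then have "e \<in> K44_E" using K44_mem assms by auto
    then show "e \<in> star K44_E i" unfolding star_def using j by auto
  qed
qed

lemma K44_star_card: assumes "i < 8" shows "card (star K44_E i) = 4"
proof (cases "i < 4")
  case True
  have "inj_on (\<lambda>j. {i, j}) {4..<8::nat}" unfolding inj_on_def using True by (auto simp: doubleton_eq_iff)
  then show ?thesis using K44_star_lo[OF True] by (simp add: card_image)
next
  case False
  have "inj_on (\<lambda>j. {j, i}) {0..<4::nat}" unfolding inj_on_def using False by (auto simp: doubleton_eq_iff)
  then show ?thesis using K44_star_hi[of i] False assms by (simp add: card_image)
qed

definition bd :: "'a set set \<Rightarrow> 'a set \<Rightarrow> 'a set set" where
  "bd E S = {e\<in>E. e \<inter> S \<noteq> {} \<and> \<not> e \<subseteq> S}"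

lemma bd_compl:
  assumes "\<And>e. e \<in> E \<Longrightarrow> e \<subseteq> V"
  shows "bd E (V - S) = bd E S"
  unfolding bd_def using assms by blast

lemma disc_cut:
  assumes "C \<in> disc V E k" "\<And>e. e \<in> E \<Longrightarrow> e \<subseteq> V" "z \<in> V"
    "\<forall>e\<in>E. \<exists>u v. u \<noteq> v \<and> e = {u, v}"
  shows "\<exists>S. S \<subseteq> V \<and> z \<in> S \<and> S \<noteq> V \<and> bd E S \<subseteq> C"
proof -
  have "\<not> graph_connected V (E - C)" using assms(1) unfolding disc_def by simp
  then obtain u w where uw: "u \<in> V" "w \<in> V" "(u, w) \<notin> (adj (E - C))\<^sup>*"
    unfolding graph_connected_def by blast
  define R where "R = (adj (E - C))\<^sup>*"
  define T where "T = {x\<in>V. (u, x) \<in> R}"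
  have TV: "T \<subseteq> V" "u \<in> T" "w \<notin> T" using uw unfolding T_def R_def by auto
  have bT: "bd E T \<subseteq> C"
  proof
    fix e assume e: "e \<in> bd E T"
    then obtain x y where xy: "x \<in> e" "x \<in> T" "y \<in> e" "y \<notin> T" "e \<in> E" unfolding bd_def by blast
    have eV: "e \<subseteq> V" using assms(2) xy(5) by blast
    show "e \<in> C"
    proof (rule ccontr)
      assume nC: "e \<notin> C"
      have "x \<noteq> y" using xy by blast
      obtain p q where "e = {p, q}" using assms(4) xy(5) by blast
      then have exy: "e = {x, y}" using xy \<open>x \<noteq> y\<close> by blast
      have "(x, y) \<in> adj (E - C)" unfolding adj_def using exy nC xy(5) by simp
      moreover have "(u, x) \<in> R" using xy(2) unfolding T_def by blast
      ultimately have "(u, y) \<in> R" unfolding R_def by (rule rtrancl_into_rtrancl[rotated])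
      moreover have "y \<in> V" using xy(3) eV by blast
      ultimately have "y \<in> T" unfolding T_def by blast
      then show False using xy(4) by blast
    qed
  qed
  show ?thesis
  proof (cases "z \<in> T")
    case True
    have "T \<noteq> V" using TV(3) uw(2) by blast
    then have "T \<subseteq> V \<and> z \<in> T \<and> T \<noteq> V \<and> bd E T \<subseteq> C" using TV(1) True bT by blast
    then show ?thesis by (rule exI)
  next
    case False
    have "bd E (V - T) = bd E T" by (rule bd_compl) (rule assms(2))
    moreover have "V - T \<noteq> V" using TV(2) uw(1) by blast
    ultimately have "V - T \<subseteq> V \<and> z \<in> V - T \<and> V - T \<noteq> V \<and> bd E (V - T) \<subseteq> C"
      using False assms(3) bT by auto
    then show ?thesis by (rule exI)
  qed
qed



lemma bd_single:
  assumes "\<forall>e\<in>E. \<exists>u v. u \<noteq> v \<and> e = {u, v}"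
  shows "bd E {x} = star E x"
proof (rule set_eqI)
  fix e show "e \<in> bd E {x} \<longleftrightarrow> e \<in> star E x"
  proof
    assume "e \<in> bd E {x}" then show "e \<in> star E x" unfolding bd_def star_def by blast
  next
    assume e: "e \<in> star E x"
    then have "e \<in> E" "x \<in> e" unfolding star_def by auto
    then obtain u v where "u \<noteq> v" "e = {u, v}" using assms by blast
    then have "\<not> e \<subseteq> {x}" by auto
    then show "e \<in> bd E {x}" unfolding bd_def using \<open>e \<in> E\<close> \<open>x \<in> e\<close> by blast
  qed
qed

lemma bd_pair:
  assumes "\<forall>e\<in>E. \<exists>u v. u \<noteq> v \<and> e = {u, v}" "x \<noteq> y"
  shows "bd E {x, y} = (star E x \<union> star E y) - {{x, y}}"
proof (rule set_eqI)
  fix e show "e \<in> bd E {x, y} \<longleftrightarrow> e \<in> (star E x \<union> star E y) - {{x, y}}"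
  proof (cases "e \<in> E")
    case True
    then obtain u v where uv: "u \<noteq> v" "e = {u, v}" using assms by blast
    have "e \<subseteq> {x, y} \<longleftrightarrow> e = {x, y}" using uv assms(2) by (auto simp: doubleton_eq_iff)
    moreover have "e \<inter> {x, y} \<noteq> {} \<longleftrightarrow> x \<in> e \<or> y \<in> e" by blast
    ultimately show ?thesis unfolding bd_def star_def using True by blast
  next
    case False then show ?thesis unfolding bd_def star_def by blast
  qed
qed

lemma bd_img:
  assumes "S \<subseteq> K44_V"
  shows "bd K44_E S = (\<lambda>(i, j). {i, j}) ` ((S \<inter> {0..<4}) \<times> ({4..<8} - S) \<union> ({0..<4} - S) \<times> (S \<inter> {4..<8}))"
proof (rule set_eqI)
  fix e
  show "e \<in> bd K44_E S \<longleftrightarrow> e \<in> (\<lambda>(i, j). {i, j}) ` ((S \<inter> {0..<4}) \<times> ({4..<8} - S) \<union> ({0..<4} - S) \<times> (S \<inter> {4..<8}))"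
  proof
    assume e: "e \<in> bd K44_E S"
    then have eE: "e \<in> K44_E" "e \<inter> S \<noteq> {}" "\<not> e \<subseteq> S" unfolding bd_def by auto
    then obtain i j where ij: "i < 4" "4 \<le> j" "j < 8" "e = {i, j}" using K44_edge by blast
    show "e \<in> (\<lambda>(i, j). {i, j}) ` ((S \<inter> {0..<4}) \<times> ({4..<8} - S) \<union> ({0..<4} - S) \<times> (S \<inter> {4..<8}))"
    proof (cases "i \<in> S")
      case True
      then have "j \<notin> S" using eE ij by auto
      then have "(i, j) \<in> (S \<inter> {0..<4}) \<times> ({4..<8} - S)" using True ij by auto
      then show ?thesis using ij(4) by (intro image_eqI[of _ _ "(i, j)"]) auto
    next
      case False
      then have "j \<in> S" using eE ij by auto
      then have "(i, j) \<in> ({0..<4} - S) \<times> (S \<inter> {4..<8})" using False ij by auto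
      then show ?thesis using ij(4) by (intro image_eqI[of _ _ "(i, j)"]) auto
    qed
  next
    assume "e \<in> (\<lambda>(i, j). {i, j}) ` ((S \<inter> {0..<4}) \<times> ({4..<8} - S) \<union> ({0..<4} - S) \<times> (S \<inter> {4..<8}))"
    then obtain p where p: "p \<in> (S \<inter> {0..<4}) \<times> ({4..<8} - S) \<union> ({0..<4} - S) \<times> (S \<inter> {4..<8})"
      "e = (\<lambda>(i, j). {i, j}) p" by blast
    obtain i j where "p = (i, j)" by (cases p)
    then have ij: "(i, j) \<in> (S \<inter> {0..<4}) \<times> ({4..<8} - S) \<union> ({0..<4} - S) \<times> (S \<inter> {4..<8})"
      "e = {i, j}" using p by auto
    then have "i < 4" "4 \<le> j" "j < 8" by auto
    then have "e \<in> K44_E" using ij(2) K44_mem by auto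
    moreover have "e \<inter> S \<noteq> {}" "\<not> e \<subseteq> S" using ij by auto
    ultimately show "e \<in> bd K44_E S" unfolding bd_def by blast
  qed
qed

lemma bd_card:
  assumes "S \<subseteq> K44_V"
  shows "card (bd K44_E S) = card (S \<inter> {0..<4}) * (4 - card (S \<inter> {4..<8}))
           + (4 - card (S \<inter> {0..<4})) * card (S \<inter> {4..<8})"
proof -
  let ?P1 = "(S \<inter> {0..<4}) \<times> ({4..<8} - S)"
  let ?P2 = "({0..<4} - S) \<times> (S \<inter> {4..<8})"
  have sub: "?P1 \<union> ?P2 \<subseteq> {0..<4} \<times> {4..<8}" by auto
  have inj: "inj_on (\<lambda>(i::nat, j::nat). {i, j}) (?P1 \<union> ?P2)" using inj_on_subset[OF K44_inj sub] .
  have d: "?P1 \<inter> ?P2 = {}" by auto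
  have c1: "card ({4..<8::nat} - S) = 4 - card (S \<inter> {4..<8})"
  proof -
    have "{4..<8::nat} - S = {4..<8} - (S \<inter> {4..<8})" by auto
    then show ?thesis by (simp add: card_Diff_subset)
  qed
  have c2: "card ({0..<4::nat} - S) = 4 - card (S \<inter> {0..<4})"
  proof -
    have "{0..<4::nat} - S = {0..<4} - (S \<inter> {0..<4})" by auto
    then show ?thesis by (simp add: card_Diff_subset)
  qed
  have "card (bd K44_E S) = card (?P1 \<union> ?P2)" unfolding bd_img[OF assms] using inj by (rule card_image)
  also have "\<dots> = card ?P1 + card ?P2" by (rule card_Un_disjoint[OF _ _ d]) auto
  also have "\<dots> = card (S \<inter> {0..<4}) * (4 - card (S \<inter> {4..<8}))
           + (4 - card (S \<inter> {0..<4})) * card (S \<inter> {4..<8})"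
    using c1 c2 by (simp add: card_cartesian_product)
  finally show ?thesis .
qed

lemma ab_cases:
  fixes a b :: nat
  assumes "a \<le> 4" "b \<le> 4" "1 \<le> a + b" "a + b \<le> 7" "a * (4 - b) + (4 - a) * b \<le> 7"
  shows "(a = 1 \<and> b = 0) \<or> (a = 0 \<and> b = 1) \<or> (a = 1 \<and> b = 1) \<or> (a = 3 \<and> b = 3) \<or> (a = 4 \<and> b = 3) \<or> (a = 3 \<and> b = 4)"
proof -
  have "a \<in> {0, 1, 2, 3, 4}" "b \<in> {0, 1, 2, 3, 4}" using assms by auto
  then show ?thesis using assms by auto
qed



definition PS :: "nat set \<Rightarrow> bool" where
  "PS S \<longleftrightarrow> (\<exists>w<8. bd K44_E S = star K44_E w) \<or>
     (\<exists>u w. u < 4 \<and> 4 \<le> w \<and> w < 8 \<and> bd K44_E S = (star K44_E u \<union> star K44_E w) - {{u, w}})"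

lemma V_split: "K44_V = {0..<4} \<union> {4..<8}" unfolding K44_V_def by auto

lemma small_S:
  assumes "S \<subseteq> K44_V"
    "(card (S \<inter> {0..<4}) = 1 \<and> card (S \<inter> {4..<8}) = 0) \<or> (card (S \<inter> {0..<4}) = 0 \<and> card (S \<inter> {4..<8}) = 1)
     \<or> (card (S \<inter> {0..<4}) = 1 \<and> card (S \<inter> {4..<8}) = 1)"
  shows "PS S"
proof -
  have Sdec: "S = (S \<inter> {0..<4}) \<union> (S \<inter> {4..<8})" using assms(1) V_split by auto
  have f: "finite (S \<inter> {0..<4::nat})" "finite (S \<inter> {4..<8::nat})" by auto
  from assms(2) consider "card (S \<inter> {0..<4}) = 1" "card (S \<inter> {4..<8}) = 0"
    | "card (S \<inter> {0..<4}) = 0" "card (S \<inter> {4..<8}) = 1"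
    | "card (S \<inter> {0..<4}) = 1" "card (S \<inter> {4..<8}) = 1" by meson
  then show ?thesis
  proof cases
    case 1
    then obtain x where x: "S \<inter> {0..<4} = {x}" by (meson card_1_singletonE)
    have "S \<inter> {4..<8} = {}" using 1 f by simp
    then have "S = {x}" using Sdec x by simp
    moreover have "x < 8" using x by auto
    ultimately show ?thesis unfolding PS_def using bd_single[OF K44_simple] by blast
  next
    case 2
    then obtain x where x: "S \<inter> {4..<8} = {x}" by (meson card_1_singletonE)
    have "S \<inter> {0..<4} = {}" using 2 f by simp
    then have "S = {x}" using Sdec x by simp
    moreover have "x < 8" using x by auto
    ultimately show ?thesis unfolding PS_def using bd_single[OF K44_simple] by blast
  next
    case 3
    then obtain x where x: "S \<inter> {0..<4} = {x}" by (meson card_1_singletonE)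
    obtain y where y: "S \<inter> {4..<8} = {y}" using 3 by (meson card_1_singletonE)
    have "S = {x, y}" using Sdec x y by auto
    moreover have "x < 4" "4 \<le> y" "y < 8" using x y by auto
    moreover have "x \<noteq> y" using calculation by auto
    ultimately show ?thesis unfolding PS_def using bd_pair[OF K44_simple] by blast
  qed
qed

lemma K44_small_cut:
  assumes "S \<subseteq> K44_V" "S \<noteq> {}" "S \<noteq> K44_V" "card (bd K44_E S) \<le> 7"
  shows "PS S"
proof -
  define a where "a = card (S \<inter> {0..<4})"
  define b where "b = card (S \<inter> {4..<8})"
  have fV: "finite K44_V" "card K44_V = 8" unfolding K44_V_def by auto
  have fS: "finite S" using assms(1) fV finite_subset by blast
  have Sdec: "S = (S \<inter> {0..<4}) \<union> (S \<inter> {4..<8})" using assms(1) V_split by auto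
  have "card ((S \<inter> {0..<4}) \<union> (S \<inter> {4..<8})) = card (S \<inter> {0..<4}) + card (S \<inter> {4..<8})"
    by (rule card_Un_disjoint) auto
  then have cS: "card S = a + b" unfolding a_def b_def using Sdec by simp
  have c1: "card S \<ge> 1" using fS assms(2) by (simp add: Suc_le_eq card_gt_0_iff)
  have "S \<subset> K44_V" using assms(1,3) by blast
  then have c2: "card S < 8" using psubset_card_mono[OF fV(1)] fV(2) by simp
  have "card (S \<inter> {0..<4}) \<le> card {0..<4::nat}" by (rule card_mono) auto
  then have c3: "a \<le> 4" unfolding a_def by simp
  have "card (S \<inter> {4..<8}) \<le> card {4..<8::nat}" by (rule card_mono) auto
  then have c4: "b \<le> 4" unfolding b_def by simp
  have c5: "a * (4 - b) + (4 - a) * b \<le> 7" using bd_card[OF assms(1)] assms(4) unfolding a_def b_def by simp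
  have ab: "(a = 1 \<and> b = 0) \<or> (a = 0 \<and> b = 1) \<or> (a = 1 \<and> b = 1) \<or> (a = 3 \<and> b = 3) \<or> (a = 4 \<and> b = 3) \<or> (a = 3 \<and> b = 4)"
    using c1 c2 c3 c4 c5 cS by (intro ab_cases) simp_all
  show ?thesis
  proof (cases "a + b \<le> 2")
    case True
    then show ?thesis using ab small_S[OF assms(1)] unfolding a_def b_def by auto
  next
    case False
    let ?T = "K44_V - S"
    have T1: "?T \<inter> {0..<4} = {0..<4} - (S \<inter> {0..<4})" unfolding K44_V_def by auto
    have T2: "?T \<inter> {4..<8} = {4..<8} - (S \<inter> {4..<8})" unfolding K44_V_def by auto
    have "card (?T \<inter> {0..<4}) = 4 - a" unfolding T1 a_def by (subst card_Diff_subset) auto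
    moreover have "card (?T \<inter> {4..<8}) = 4 - b" unfolding T2 b_def by (subst card_Diff_subset) auto
    ultimately have "PS ?T" using ab False by (intro small_S) auto
    moreover have "bd K44_E ?T = bd K44_E S" using bd_compl[of K44_E K44_V S] K44_sub by blast
    ultimately show ?thesis unfolding PS_def by simp
  qed
qed

definition UA :: "nat \<Rightarrow> nat set set set" where
  "UA k = (\<Union>w\<in>{0..<8}. supsets K44_E k (star K44_E w))"

definition UB :: "nat \<Rightarrow> nat set set set" where
  "UB k = (\<Union>p\<in>{0..<4} \<times> {4..<8}. supsets (K44_E - {{fst p, snd p}}) k
              ((star K44_E (fst p) \<union> star K44_E (snd p)) - {{fst p, snd p}}))"

definition RR :: "nat set set set" where
  "RR = bd K44_E ` {S. S \<subseteq> K44_V \<and> 0 \<in> S}"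

lemma K44_disc_sub:
  assumes "k \<le> 8"
  shows "disc K44_V K44_E k \<subseteq> UA k \<union> UB k \<union> (if k = 8 then RR else {})"
proof
  fix C assume C: "C \<in> disc K44_V K44_E k"
  then have CE: "C \<subseteq> K44_E" "card C = k" unfolding disc_def by auto
  have fC: "finite C" using CE K44_fin finite_subset by blast
  have "0 \<in> K44_V" unfolding K44_V_def by simp
  then obtain S where S: "S \<subseteq> K44_V" "0 \<in> S" "S \<noteq> K44_V" "bd K44_E S \<subseteq> C"
    using disc_cut[OF C K44_sub _ K44_simple] by blast
  have bk: "card (bd K44_E S) \<le> k" using card_mono[OF fC S(4)] CE by simp
  show "C \<in> UA k \<union> UB k \<union> (if k = 8 then RR else {})"
  proof (cases "card (bd K44_E S) \<le> 7")
    case True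
    have "S \<noteq> {}" using S by auto
    then have "PS S" using K44_small_cut S True by blast
    then show ?thesis unfolding PS_def
    proof (elim disjE exE conjE)
      fix w assume w: "w < 8" "bd K44_E S = star K44_E w"
      then have "C \<in> supsets K44_E k (star K44_E w)" unfolding supsets_def using CE S by auto
      moreover have "w \<in> {0..<8}" using w by simp
      ultimately have "C \<in> UA k" unfolding UA_def by (rule UN_I[rotated])
      then show ?thesis by blast
    next
      fix u w assume uw: "u < 4" "4 \<le> w" "w < 8" "bd K44_E S = (star K44_E u \<union> star K44_E w) - {{u, w}}"
      show ?thesis
      proof (cases "{u, w} \<in> C")
        case True
        have "star K44_E u \<subseteq> (star K44_E u \<union> star K44_E w) - {{u, w}} \<union> {{u, w}}" by blast
        then have "star K44_E u \<subseteq> C" using uw(4) S(4) True by blast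
        then have "C \<in> supsets K44_E k (star K44_E u)" unfolding supsets_def using CE by auto
        moreover have "u \<in> {0..<8}" using uw by simp
        ultimately have "C \<in> UA k" unfolding UA_def by (rule UN_I[rotated])
        then show ?thesis by blast
      next
        case False
        then have "C \<in> supsets (K44_E - {{u, w}}) k ((star K44_E u \<union> star K44_E w) - {{u, w}})"
          unfolding supsets_def using CE S(4) uw by auto
        moreover have "(u, w) \<in> {0..<4} \<times> {4..<8}" using uw by auto
        ultimately have "C \<in> UB k" unfolding UB_def by (intro UN_I[of "(u, w)"]) simp_all
        then show ?thesis by blast
      qed
    qed
  next
    case False
    then have k8: "k = 8" "card (bd K44_E S) = card C" using bk assms CE by auto
    then have "bd K44_E S = C" using card_subset_eq[OF fC S(4)] by simp
    then have "C \<in> RR" unfolding RR_def using S by blast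
    then show ?thesis using k8 by simp
  qed
qed



lemma UA_card: "card (UA k) \<le> 8 * (if 4 \<le> k then 12 choose (k - 4) else 0)"
proof -
  have c: "card (supsets K44_E k (star K44_E w)) = (if 4 \<le> k then 12 choose (k - 4) else 0)" if "w \<in> {0..<8}" for w
    using card_supsets[OF K44_fin star_sub, of k w] K44_card K44_star_card[of w] that by simp
  have "card (UA k) \<le> (\<Sum>w\<in>{0..<8}. card (supsets K44_E k (star K44_E w)))"
    unfolding UA_def by (rule card_UN_le) simp
  also have "\<dots> = (\<Sum>w\<in>{0..<8::nat}. (if 4 \<le> k then 12 choose (k - 4) else 0))"
    using c by (rule sum.cong[OF refl])
  finally show ?thesis by simp
qed

lemma UB_card: "card (UB k) \<le> 16 * (if 6 \<le> k then 9 choose (k - 6) else 0)"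
proof -
  have c: "card (supsets (K44_E - {{fst p, snd p}}) k ((star K44_E (fst p) \<union> star K44_E (snd p)) - {{fst p, snd p}}))
      = (if 6 \<le> k then 9 choose (k - 6) else 0)" if "p \<in> {0..<4} \<times> {4..<8}" for p
  proof -
    obtain u w where p: "p = (u, w)" by (cases p)
    have uw: "u < 4" "4 \<le> w" "w < 8" using that p by auto
    have e: "{u, w} \<in> K44_E" using uw K44_mem by auto
    have ne: "u \<noteq> w" using uw by auto
    have i: "star K44_E u \<inter> star K44_E w = {{u, w}}" using star_Int_eq[OF K44_simple ne] e by simp
    have "card (star K44_E u \<union> star K44_E w) = 7"
      using star_Un_card[OF K44_simple ne K44_fin] i K44_star_card[of u] K44_star_card[of w] uw by simp
    moreover have "{u, w} \<in> star K44_E u \<union> star K44_E w" using i by blast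
    moreover have "finite (star K44_E u \<union> star K44_E w)" using K44_fin star_sub finite_subset
      by (metis finite_Un)
    ultimately have cD: "card ((star K44_E u \<union> star K44_E w) - {{u, w}}) = 6" by simp
    have cE: "card (K44_E - {{u, w}}) = 15" using e K44_card K44_fin by simp
    have sub: "(star K44_E u \<union> star K44_E w) - {{u, w}} \<subseteq> K44_E - {{u, w}}" unfolding star_def by blast
    show ?thesis using card_supsets[OF _ sub, of k] K44_fin cD cE p by simp
  qed
  have "card (UB k) \<le> (\<Sum>p\<in>{0..<4::nat} \<times> {4..<8::nat}. card (supsets (K44_E - {{fst p, snd p}}) k ((star K44_E (fst p) \<union> star K44_E (snd p)) - {{fst p, snd p}})))"
    unfolding UB_def by (rule card_UN_le) simp
  also have "\<dots> = (\<Sum>p\<in>{0..<4::nat} \<times> {4..<8::nat}. (if 6 \<le> k then 9 choose (k - 6) else 0))"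
    using c by (rule sum.cong[OF refl])
  finally show ?thesis by simp
qed

lemma RR_card: "card RR \<le> 128"
proof -
  have sub: "{S. S \<subseteq> K44_V \<and> 0 \<in> S} \<subseteq> insert 0 ` Pow {1..<8}"
  proof
    fix S assume S: "S \<in> {S. S \<subseteq> K44_V \<and> 0 \<in> S}"
    then have "S = insert 0 (S - {0})" "S - {0} \<in> Pow {1..<8}" unfolding K44_V_def by auto
    then show "S \<in> insert 0 ` Pow {1..<8}" by blast
  qed
  have "card RR \<le> card {S. S \<subseteq> K44_V \<and> 0 \<in> S}" unfolding RR_def
    by (rule card_image_le) (rule finite_subset[OF sub], simp)
  also have "\<dots> \<le> card (insert 0 ` Pow {1..<8::nat})" by (rule card_mono[OF _ sub]) simp
  also have "\<dots> \<le> card (Pow {1..<8::nat})" by (rule card_image_le) simp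
  also have "\<dots> = 128" by (simp add: card_Pow)
  finally show ?thesis .
qed

lemma triple9:
  assumes "x < 8" "y < 8" "z < 8" "x \<noteq> y" "y \<noteq> z" "x \<noteq> z"
  shows "card (star K44_E x \<union> star K44_E y \<union> star K44_E z) \<ge> 9"
proof -
  let ?x = "star K44_E x" and ?y = "star K44_E y" and ?z = "star K44_E z"
  have f: "finite ?x" "finite ?y" "finite ?z" using K44_fin star_sub finite_subset by metis+
  have cx: "card ?x = 4" "card ?y = 4" "card ?z = 4" using K44_star_card assms by auto
  have ixy: "card (?x \<inter> ?y) \<le> 1" using star_Int_card[OF K44_simple assms(4) K44_fin] .
  have ixz: "card (?x \<inter> ?z) \<le> 1" using star_Int_card[OF K44_simple assms(6) K44_fin] .
  have iyz: "card (?y \<inter> ?z) \<le> 1" using star_Int_card[OF K44_simple assms(5) K44_fin] .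
  have "card (?x \<union> ?y) + card (?x \<inter> ?y) = card ?x + card ?y" using card_Un_Int[OF f(1,2)] by simp
  then have u1: "card (?x \<union> ?y) \<ge> 7" using ixy cx by linarith
  have "(?x \<union> ?y) \<inter> ?z = (?x \<inter> ?z) \<union> (?y \<inter> ?z)" by blast
  then have "card ((?x \<union> ?y) \<inter> ?z) \<le> card (?x \<inter> ?z) + card (?y \<inter> ?z)" by (simp add: card_Un_le)
  then have i2: "card ((?x \<union> ?y) \<inter> ?z) \<le> 2" using ixz iyz by linarith
  have "card (?x \<union> ?y \<union> ?z) + card ((?x \<union> ?y) \<inter> ?z) = card (?x \<union> ?y) + card ?z"
    using card_Un_Int[of "?x \<union> ?y" ?z] f by simp
  then show ?thesis using u1 i2 cx by linarith
qed

lemma pairA: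
  assumes "i < 8" "j < 8" "i \<noteq> j"
  shows "card (supsets K44_E 8 (star K44_E i) \<inter> supsets K44_E 8 (star K44_E j)) = (if (i < 4) = (j < 4) then 1 else 9)"
proof -
  have c: "card (supsets K44_E 8 (star K44_E i) \<inter> supsets K44_E 8 (star K44_E j)) = gg (card (star K44_E i \<union> star K44_E j))"
    unfolding supsets_Int using K44_fin K44_card by (intro card_supsets_gg) (auto simp: star_def)
  have u: "card (star K44_E i \<union> star K44_E j) = 8 - card (star K44_E i \<inter> star K44_E j)"
    using star_Un_card[OF K44_simple assms(3) K44_fin] K44_star_card assms by simp
  have "star K44_E i \<inter> star K44_E j = (if {i, j} \<in> K44_E then {{i, j}} else {})"
    by (rule star_Int_eq[OF K44_simple assms(3)])
  moreover have "{i, j} \<in> K44_E \<longleftrightarrow> (i < 4) \<noteq> (j < 4)" using K44_mem assms by auto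
  ultimately have "card (star K44_E i \<inter> star K44_E j) = (if (i < 4) = (j < 4) then 0 else 1)"
    by (cases "(i < 4) = (j < 4)") simp_all
  then show ?thesis using c u by (simp add: gg_vals)
qed

lemma UA8: "card (UA 8) \<le> 3804"
proof -
  let ?A = "\<lambda>w. supsets K44_E 8 (star K44_E w)"
  let ?L = "[0, 1, 2, 3, 4, 5, 6, 7::nat]"
  have sL: "set ?L = {0..<8}" by auto
  have fA: "\<And>x. finite (?A x)" using supsets_finite[OF K44_fin] .
  have Lb: "\<forall>x\<in>set ?L. x < 8" by simp
  have tri: "?A x \<inter> ?A y \<inter> ?A z = {}" if "x \<in> set ?L" "y \<in> set ?L" "z \<in> set ?L" "x \<noteq> y" "y \<noteq> z" "x \<noteq> z" for x y z
  proof -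
    have "?A x \<inter> ?A y \<inter> ?A z = supsets K44_E 8 (star K44_E x \<union> star K44_E y \<union> star K44_E z)"
      by (simp add: supsets_Int)
    moreover have "card (star K44_E x \<union> star K44_E y \<union> star K44_E z) \<ge> 9"
    proof -
      have "x < 8" "y < 8" "z < 8" using Lb that(1-3) by blast+
      then show ?thesis using triple9[of x y z] that(4-6) by blast
    qed
    moreover have "star K44_E x \<union> star K44_E y \<union> star K44_E z \<subseteq> K44_E" unfolding star_def by blast
    ultimately have "card (?A x \<inter> ?A y \<inter> ?A z) = 0" using card_supsets[OF K44_fin] by simp
    moreover have "finite (?A x \<inter> ?A y \<inter> ?A z)" using fA by simp
    ultimately show ?thesis by simp
  qed
  have eq: "card (\<Union>x\<in>set ?L. ?A x) + psum ?A ?L = sum_list (map (\<lambda>x. card (?A x)) ?L)"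
    by (rule bonf_upper[OF fA _ tri]) simp_all
  have cA: "\<And>w. w < 8 \<Longrightarrow> card (?A w) = 495"
    using K44_fin K44_card K44_star_card by (subst card_supsets_gg) (auto simp: star_def gg_vals)
  have "sum_list (map (\<lambda>x. card (?A x)) ?L) = 3960" using cA by simp
  moreover have "psum ?A ?L = 156" using pairA by simp
  moreover have "UA 8 = (\<Union>x\<in>set ?L. ?A x)" unfolding UA_def sL ..
  ultimately show ?thesis using eq by simp
qed

lemma K44_bound:
  assumes "k \<le> 8"
  shows "card (disc K44_V K44_E k) \<le> card (UA k) + card (UB k) + (if k = 8 then card RR else 0)"
proof -
  have fin: "finite (UA k \<union> UB k \<union> (if k = 8 then RR else {}))"
  proof -
    have "UA k \<subseteq> Pow K44_E" "UB k \<subseteq> Pow K44_E" unfolding UA_def UB_def supsets_def by auto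
    moreover have "finite RR" unfolding RR_def K44_V_def by simp
    ultimately show ?thesis using K44_fin finite_subset by (simp add: finite_subset)
  qed
  have "card (disc K44_V K44_E k) \<le> card (UA k \<union> UB k \<union> (if k = 8 then RR else {}))"
    by (rule card_mono[OF fin K44_disc_sub[OF assms]])
  also have "\<dots> \<le> card (UA k \<union> UB k) + card (if k = 8 then RR else {})" by (rule card_Un_le)
  also have "\<dots> \<le> card (UA k) + card (UB k) + card (if k = 8 then RR else {})"
    using card_Un_le by simp
  finally show ?thesis by (cases "k = 8") auto
qed



lemma G_small:
  assumes sg: "simple_graph V E" and cV: "card V = 8" and cE: "card E = 16" and md: "min_degree V E = 2"
    and k: "2 \<le> k"
  shows "14 choose (k - 2) \<le> card (disc V E k)"
proof -
  have fV: "finite V" using sg unfolding simple_graph_def by blast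
  have fE: "finite E" using cE card.infinite by fastforce
  have Vne: "V \<noteq> {}" using cV by auto
  have "Min (degree E ` V) \<in> degree E ` V" using fV Vne by (intro Min_in) auto
  then obtain v where v: "v \<in> V" "degree E v = 2" using md unfolding min_degree_def by auto
  have "card (V - {v}) = 7" using cV v fV by simp
  then obtain y where "y \<in> V - {v}" by (metis card.empty ex_in_conv zero_neq_numeral)
  then have y: "y \<in> V" "y \<noteq> v" by auto
  have sub: "supsets E k (star E v) \<subseteq> disc V E k" using supsets_star_disc[OF v(1) y(1)] y(2) by auto
  have "finite (disc V E k)" by (rule finite_subset[of _ "Pow E"]) (auto simp: disc_def fE)
  then have "card (supsets E k (star E v)) \<le> card (disc V E k)" using sub by (rule card_mono)
  moreover have "card (supsets E k (star E v)) = 14 choose (k - 2)"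
    using card_supsets[OF fE star_sub, of k v] cE v(2) k unfolding degree_star by simp
  ultimately show ?thesis by simp
qed

lemma cc_disc: "cutset_count V E k = card (disc V E k)"
  unfolding cutset_count_def disc_def by simp

theorem mainTheorem5:
  fixes V :: "'a set" and E :: "'a set set" and k :: nat
  assumes "simple_graph V E"
    and "card V = 8"
    and "card E = 16"
    and "min_degree V E = 2"
    and "k \<in> {5, 6, 7, 8}"
  shows "cutset_count K44_V K44_E k < cutset_count V E k"
proof -
  have kb: "k \<le> 8" using assms(5) by auto
  have K: "card (disc K44_V K44_E k) \<le> card (UA k) + card (UB k) + (if k = 8 then card RR else 0)"
    using K44_bound[OF kb] .
  have ua: "card (UA k) \<le> 8 * (if 4 \<le> k then 12 choose (k - 4) else 0)" by (rule UA_card)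
  have ub: "card (UB k) \<le> 16 * (if 6 \<le> k then 9 choose (k - 6) else 0)" by (rule UB_card)
  have g: "14 choose (k - 2) \<le> card (disc V E k)" using G_small[OF assms(1-4), of k] assms(5) by auto
  have b: "12 choose 1 = (12::nat)" "12 choose 2 = (66::nat)" "12 choose 3 = (220::nat)"
    "9 choose 0 = (1::nat)" "9 choose 1 = (9::nat)"
    "14 choose 3 = (364::nat)" "14 choose 4 = (1001::nat)" "14 choose 5 = (2002::nat)"
    by (simp_all add: binomial_code fold_atLeastAtMost_nat.simps fact_numeral)
  have "card (disc K44_V K44_E k) < card (disc V E k)"
  proof -
    consider "k = 5" | "k = 6" | "k = 7" | "k = 8" using assms(5) by blast
    then show ?thesis
    proof cases
      case 1 then show ?thesis using K ua ub g b by simp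
    next
      case 2 then show ?thesis using K ua ub g b by simp
    next
      case 3 then show ?thesis using K ua ub g b by simp
    next
      case 4
      have "9 choose 2 = (36::nat)" by (simp add: binomial_code fold_atLeastAtMost_nat.simps fact_numeral)
      then have "card (disc K44_V K44_E k) \<le> 4508" using K UB_card[of 8] UA8 RR_card 4 by simp
      then show ?thesis using G_main8[OF assms(1-4)] 4 by simp
    qed
  qed
  then show ?thesis unfolding cc_disc .
qed


end
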